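(* Let $n,d$ be positive integers, $\mathbf{c}\in\mathbb{Z}^n_+$, and $\mathbb{P}\subseteq[0,d]^n$ a bounded polyhedron with $\mathbb{P}\cap\mathbb{Z}^n\ne\emptyset$. Let $a_1=d$ and $a_k=d(1+\sum_{j=1}^{k-1}a_j)$ for $k\in\{2,\dots,n\}$. Consider the following cutting plane algorithm. Set $L_0=\{\mathbf{z}=(z_0,\dots,z_n)\in\mathbb{R}^{n+1}: (z_1,\dots,z_n)\in\mathbb{P},\ z_0=\sum_{i=1}^n c_iz_i\}$. At iteration $t=0,1,2,\dots$, let $\mathbf{z}_t^\star$ be a lexicographically maximum element of $L_t$; if $\mathbf{z}_t^\star$ is integral, stop; otherwise let $k=\min\{j: (\mathbf{z}^\star_t)_j\notin\mathbb{Z}\}$ and set $L_{t+1}=L_t\cap\{\mathbf{z}: z_k+\sum_{j=0}^{k-1}a_{k-j}(z_j-\lceil(\mathbf{z}_t^\star)_j\rceil)\le\lfloor(\mathbf{z}_t^\star)_k\rfloor\}$. If $\mathbf{z}_t^\star$ and $\mathbf{z}_{t+1}^\star$ are both not integral, then $\alpha(\mathbf{z}_{t+1}^\star)<_L\alpha(\mathbf{z}_t^\star)$.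
   Context: Lexicographic order on $\mathbb{R}^{n+1}$: $\mathbf{x}<_L\mathbf{y}$ if there is $k\in\{0,\dots,n\}$ with $x_k<y_k$ and $x_i=y_i$ for all $i<k$; $\mathbf{x}\le_L\mathbf{y}$ means $\mathbf{x}<_L\mathbf{y}$ or $\mathbf{x}=\mathbf{y}$. A lexicographically maximum element of a set $T$ is some $\mathbf{t}\in T$ with $\mathbf{s}\le_L\mathbf{t}$ for all $\mathbf{s}\in T$. For a non-integral $\mathbf{y}=(y_0,\dots,y_n)\in\mathbb{R}\times[0,d]^n$, $\alpha(\mathbf{y})$ is the integral vector with $\alpha(\mathbf{y})_i=\lfloor y_i\rfloor$ for $i\le k$ and $\alpha(\mathbf{y})_i=d$ for $i>k$, where $k=\min\{j: y_j\notin\mathbb{Z}\}$. In the algorithm, the cut added at each iteration is the one of index $k$ (the first non-integral coordinate) among the $n+1$ inequalities $z_i+\sum_{j=0}^{i-1}a_{i-j}(z_j-\lceil (\mathbf{z}_t^\star)_j\rceil)\le\lfloor(\mathbf{z}_t^\star)_i\rfloor$, $i=0,\dots,n$; this is the paper's standing assumption that the learned cut selection policy selects this cut. *)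

theory Defs
  imports Main Complex_Main
begin

text \<open>Vectors of R^(n+1) are encoded as functions nat => real, coordinates 0..n
  being the meaningful ones.\<close>

definition lex_less :: "nat \<Rightarrow> (nat \<Rightarrow> real) \<Rightarrow> (nat \<Rightarrow> real) \<Rightarrow> bool" where
  "lex_less n x y \<longleftrightarrow> (\<exists>k\<le>n. x k < y k \<and> (\<forall>i<k. x i = y i))"

definition lex_le :: "nat \<Rightarrow> (nat \<Rightarrow> real) \<Rightarrow> (nat \<Rightarrow> real) \<Rightarrow> bool" where
  "lex_le n x y \<longleftrightarrow> lex_less n x y \<or> (\<forall>i\<le>n. x i = y i)"

definition is_lexmax :: "nat \<Rightarrow> (nat \<Rightarrow> real) set \<Rightarrow> (nat \<Rightarrow> real) \<Rightarrow> bool" where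
  "is_lexmax n T t \<longleftrightarrow> t \<in> T \<and> (\<forall>s\<in>T. lex_le n s t)"

definition integral_vec :: "nat \<Rightarrow> (nat \<Rightarrow> real) \<Rightarrow> bool" where
  "integral_vec n y \<longleftrightarrow> (\<forall>i\<le>n. y i \<in> \<int>)"

definition first_nonint :: "(nat \<Rightarrow> real) \<Rightarrow> nat" where
  "first_nonint y = (LEAST j. y j \<notin> \<int>)"

definition alpha :: "nat \<Rightarrow> nat \<Rightarrow> (nat \<Rightarrow> real) \<Rightarrow> (nat \<Rightarrow> real)" where
  "alpha d n y = (\<lambda>i. if i \<le> first_nonint y then of_int \<lfloor>y i\<rfloor>
                       else if i \<le> n then real d else 0)"

definition cut_set :: "(nat \<Rightarrow> real) \<Rightarrow> nat \<Rightarrow> (nat \<Rightarrow> real) \<Rightarrow> (nat \<Rightarrow> real) set" where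
  "cut_set a k zs = {z. z k + (\<Sum>j<k. a (k - j) * (z j - of_int \<lceil>zs j\<rceil>)) \<le> of_int \<lfloor>zs k\<rfloor>}"

end

theory Submission
  imports Defs
begin

lemma fn_props:
  assumes "\<not> integral_vec n y"
  shows "first_nonint y \<le> n" "y (first_nonint y) \<notin> \<int>"
    "\<And>i. i < first_nonint y \<Longrightarrow> y i \<in> \<int>"
proof -
  obtain i where i: "i \<le> n" "y i \<notin> \<int>" using assms unfolding integral_vec_def by auto
  show "first_nonint y \<le> n" unfolding first_nonint_def
    using Least_le[of "\<lambda>j. y j \<notin> \<int>" i] i by auto
  show "y (first_nonint y) \<notin> \<int>" unfolding first_nonint_def
    using LeastI[of "\<lambda>j. y j \<notin> \<int>" i] i by auto
  show "\<And>j. j < first_nonint y \<Longrightarrow> y j \<in> \<int>" unfolding first_nonint_def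
    using not_less_Least by blast
qed

lemma main_step:
  fixes z w :: "nat \<Rightarrow> real"
  assumes nz: "\<not> integral_vec n z" and nw: "\<not> integral_vec n w"
    and le: "lex_le n z w"
    and cut: "z \<in> cut_set a (first_nonint w) w"
    and box: "\<forall>j\<in>{1..n}. 0 \<le> z j \<and> z j \<le> real d"
  shows "lex_less n (alpha d n z) (alpha d n w)"
proof -
  define k where "k = first_nonint w"
  define k' where "k' = first_nonint z"
  have kn: "k \<le> n" and wk: "w k \<notin> \<int>" and wi: "\<And>i. i < k \<Longrightarrow> w i \<in> \<int>"
    using fn_props[OF nw] unfolding k_def by auto
  have kn': "k' \<le> n" and zk': "z k' \<notin> \<int>" and zi: "\<And>i. i < k' \<Longrightarrow> z i \<in> \<int>"
    using fn_props[OF nz] unfolding k'_def by auto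
  have cutk: "z k + (\<Sum>j<k. a (k - j) * (z j - of_int \<lceil>w j\<rceil>)) \<le> of_int \<lfloor>w k\<rfloor>"
    using cut unfolding cut_set_def k_def by auto
  have wint: "of_int \<lceil>w i\<rceil> = w i" "of_int \<lfloor>w i\<rfloor> = w i" if "i < k" for i
    using wi[OF that] by (auto elim: Ints_cases)
  have floor_lt: "\<not> w k \<le> of_int \<lfloor>w k\<rfloor>"
  proof
    assume "w k \<le> of_int \<lfloor>w k\<rfloor>"
    then have "w k = of_int \<lfloor>w k\<rfloor>" using of_int_floor_le[of "w k"] by linarith
    then show False using wk by (metis Ints_of_int)
  qed
  have alw: "alpha d n w i = of_int \<lfloor>w i\<rfloor>" if "i \<le> k" for i
    using that unfolding alpha_def k_def by auto
  have alz: "alpha d n z i = of_int \<lfloor>z i\<rfloor>" if "i \<le> k'" for i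
    using that unfolding alpha_def k'_def by auto
  have neq: "\<not> (\<forall>i\<le>n. z i = w i)"
  proof
    assume eq: "\<forall>i\<le>n. z i = w i"
    have "(\<Sum>j<k. a (k - j) * (z j - of_int \<lceil>w j\<rceil>)) = 0"
    proof (intro sum.neutral ballI)
      fix j assume "j \<in> {..<k}"
      then have "j < k" by auto
      then show "a (k - j) * (z j - of_int \<lceil>w j\<rceil>) = 0" using eq wint(1)[of j] kn by auto
    qed
    with cutk eq kn floor_lt show False by auto
  qed
  with le obtain p where p: "p \<le> n" "z p < w p" "\<forall>i<p. z i = w i"
    unfolding lex_le_def lex_less_def by auto
  show ?thesis
  proof (cases "p < k")
    case True
    have pk': "p \<le> k'"
    proof (rule ccontr)
      assume "\<not> p \<le> k'"
      then have "z k' = w k'" "k' < k" using p True by auto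
      then show False using zk' wi by auto
    qed
    have "of_int \<lfloor>z p\<rfloor> < w p" using p(2) of_int_floor_le[of "z p"] by linarith
    then have "alpha d n z p < alpha d n w p"
      using alz[OF pk'] alw[of p] True wint(2)[OF True] by auto
    moreover have "\<forall>i<p. alpha d n z i = alpha d n w i"
      using alz alw pk' True p(3) by auto
    ultimately show ?thesis unfolding lex_less_def using p(1) by auto
  next
    case False
    have eqk: "\<forall>i<k. z i = w i" using False p(3) by auto
    have "(\<Sum>j<k. a (k - j) * (z j - of_int \<lceil>w j\<rceil>)) = 0"
    proof (intro sum.neutral ballI)
      fix j assume "j \<in> {..<k}"
      then have "j < k" by auto
      then show "a (k - j) * (z j - of_int \<lceil>w j\<rceil>) = 0" using eqk wint(1)[of j] by auto
    qed
    with cutk have zk: "z k \<le> of_int \<lfloor>w k\<rfloor>" by auto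
    have kk': "k \<le> k'"
    proof (rule ccontr)
      assume "\<not> k \<le> k'"
      then show False using eqk zk' wi by auto
    qed
    have eqbelow: "\<forall>i<k. alpha d n z i = alpha d n w i"
      using alz alw kk' eqk by auto
    show ?thesis
    proof (cases "z k < of_int \<lfloor>w k\<rfloor>")
      case True
      have "of_int \<lfloor>z k\<rfloor> < (of_int \<lfloor>w k\<rfloor> :: real)"
        using True of_int_floor_le[of "z k"] by linarith
      then have "alpha d n z k < alpha d n w k" using alz[OF kk'] alw[of k] by auto
      then show ?thesis unfolding lex_less_def using kn eqbelow by auto
    next
      case False
      then have zkeq: "z k = of_int \<lfloor>w k\<rfloor>" using zk by auto
      then have "z k \<in> \<int>" by auto
      then have kk'2: "k < k'" using kk' zk' by (cases "k = k'") auto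
      define Q where "Q = (\<lambda>i. k < i \<and> alpha d n z i < real d)"
      have zk'd: "z k' < real d"
      proof -
        have "z k' \<le> real d" using box kn' kk'2 by auto
        moreover have "z k' \<noteq> real d" using zk' Ints_of_nat by metis
        ultimately show ?thesis by auto
      qed
      have "of_int \<lfloor>z k'\<rfloor> < real d" using zk'd of_int_floor_le[of "z k'"] by linarith
      then have Qk': "Q k'" unfolding Q_def using alz[of k'] kk'2 by auto
      define q where "q = (LEAST i. Q i)"
      have Qq: "Q q" unfolding q_def using LeastI[of Q, OF Qk'] .
      have qk': "q \<le> k'" unfolding q_def using Least_le[of Q, OF Qk'] .
      have nQ: "\<not> Q i" if "i < q" for i using not_less_Least[of i Q] that unfolding q_def by auto
      have awq: "alpha d n w q = real d" using Qq qk' kn' unfolding alpha_def Q_def k_def by auto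
      have "\<forall>i<q. alpha d n z i = alpha d n w i"
      proof (intro allI impI)
        fix i assume iq: "i < q"
        show "alpha d n z i = alpha d n w i"
        proof (cases "i < k")
          case True then show ?thesis using eqbelow by auto
        next
          case F: False
          show ?thesis
          proof (cases "i = k")
            case True then show ?thesis using alz[OF kk'] alw[of k] zkeq by auto
          next
            case False
            then have ki: "k < i" using F by auto
            have "alpha d n z i \<ge> real d" using nQ[OF iq] ki unfolding Q_def by auto
            moreover have "alpha d n z i \<le> real d"
            proof -
              have "z i \<le> real d" using iq qk' box kn' ki by auto
              moreover have "real_of_int \<lfloor>z i\<rfloor> \<le> z i" by (rule of_int_floor_le)
              ultimately show ?thesis using alz[of i] iq qk' by linarith
            qed
            moreover have "alpha d n w i = real d"
              using ki iq qk' kn' unfolding alpha_def k_def by auto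
            ultimately show ?thesis by auto
          qed
        qed
      qed
      then show ?thesis unfolding lex_less_def using Qq awq qk' kn' unfolding Q_def
        by (intro exI[of _ q]) auto
    qed
  qed
qed

theorem lemma2:
  fixes n d m :: nat
    and c :: "nat \<Rightarrow> int"
    and A :: "nat \<Rightarrow> nat \<Rightarrow> real" and b :: "nat \<Rightarrow> real"
    and P :: "(nat \<Rightarrow> real) set"
    and a :: "nat \<Rightarrow> real"
    and L :: "nat \<Rightarrow> (nat \<Rightarrow> real) set"
    and zs :: "nat \<Rightarrow> (nat \<Rightarrow> real)"
    and t :: nat
  assumes n_pos: "n > 0" and d_pos: "d > 0"
    and c_nonneg: "\<forall>i\<in>{1..n}. c i \<ge> 0"
    and P_def: "P = {x. \<forall>i<m. (\<Sum>j=1..n. A i j * x j) \<le> b i}"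
    and P_box: "\<forall>x\<in>P. \<forall>j\<in>{1..n}. 0 \<le> x j \<and> x j \<le> real d"
    and P_int: "\<exists>x\<in>P. \<forall>j\<in>{1..n}. x j \<in> \<int>"
    and a1: "a 1 = real d"
    and ak: "\<forall>k\<in>{2..n}. a k = real d * (1 + (\<Sum>j=1..<k. a j))"
    and L0: "L 0 = {z. z \<in> P \<and> z 0 = (\<Sum>i=1..n. of_int (c i) * z i) \<and> (\<forall>j>n. z j = 0)}"
    and lexmax: "\<forall>s\<le>Suc t. is_lexmax n (L s) (zs s)"
    and step: "\<forall>s\<le>t. \<not> integral_vec n (zs s) \<and>
                  L (Suc s) = L s \<inter> cut_set a (first_nonint (zs s)) (zs s)"
    and nonint_next: "\<not> integral_vec n (zs (Suc t))"
  shows "lex_less n (alpha d n (zs (Suc t))) (alpha d n (zs t))"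
proof -
  have sub: "s \<le> Suc t \<Longrightarrow> L s \<subseteq> L 0" for s
  proof (induction s)
    case 0 then show ?case by simp
  next
    case (Suc s) then show ?case using step by auto
  qed
  have mem: "zs (Suc t) \<in> L (Suc t)" using lexmax unfolding is_lexmax_def by auto
  have memt: "zs (Suc t) \<in> L t" and cut: "zs (Suc t) \<in> cut_set a (first_nonint (zs t)) (zs t)"
    using mem step by auto
  have le: "lex_le n (zs (Suc t)) (zs t)" using lexmax memt unfolding is_lexmax_def by auto
  have "zs (Suc t) \<in> P" using sub[of "Suc t"] mem L0 by auto
  then have box: "\<forall>j\<in>{1..n}. 0 \<le> zs (Suc t) j \<and> zs (Suc t) j \<le> real d" using P_box by auto
  show ?thesis
    by (rule main_step[OF nonint_next _ le cut box]) (use step in auto)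
qed

end
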